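(* For every $n\geq 3$, the formula $\delta(n)$ is not a theorem of ${\bf T45m}$.
   Context: Formulas are built from a denumerable set of propositional variables $p_1,p_2,\ldots$ by the unary connectives $\neg$, $\Box$ and the binary connective $\to$; $For$ is the set of all formulas. Abbreviations: $\Diamond\alpha:=\neg\Box\neg\alpha$, $\alpha\vee\beta:=\neg\alpha\to\beta$. For formulas $\alpha_1,\ldots,\alpha_k$ ($k\ge 2$), $\bigvee\{\alpha_1,\ldots,\alpha_k\}:=((\ldots((\alpha_1\vee\alpha_2)\vee\alpha_3)\vee\ldots)\vee\alpha_k)$. For $n\geq 3$: $\alpha(n)=\bigvee\{p_j: 1\le j\le n\}$, $\beta_i(n)=\bigvee\{p_j:1\le j\le n,\ j\ne i\}$ for $1\le i\le n$, and $\delta(n)=\bigvee\{\Box\alpha(n)\to\Box\beta_i(n): 1\le i\le n\}$. ${\bf T45m}$ is the Hilbert calculus whose axioms are all instances (over $For$) of the axiom schemas of a standard Hilbert calculus for classical propositional logic in the signature $\{\neg,\to\}$, plus all instances of: (K) $\Box(\alpha\to\beta)\to(\Box\alpha\to\Box\beta)$; (K1) $\Box(\alpha\to\beta)\to(\Diamond\alpha\to\Diamond\beta)$; (K2) $\Diamond(\alpha\to\beta)\to(\Box\alpha\to\Diamond\beta)$; (M1) $\neg\Diamond\alpha\to\Box(\alpha\to\beta)$; (M2) $\Box\beta\to\Box(\alpha\to\beta)$; (M3) $\Diamond\beta\to\Diamond(\alpha\to\beta)$; (M4) $\Diamond\neg\alpha\to\Diamond(\alpha\to\beta)$; (T) $\Box\alpha\to\alpha$;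 (DN1) $\Box\alpha\to\Box\neg\neg\alpha$; (DN2) $\Box\neg\neg\alpha\to\Box\alpha$; (4) $\Box\alpha\to\Box\Box\alpha$; (5) $\Diamond\Box\alpha\to\Box\alpha$; modus ponens is the only rule. *)

theory Defs
  imports Main
begin

datatype form = Var nat | Neg form | Box form | Imp form form

definition Dia :: "form \<Rightarrow> form" where "Dia a = Neg (Box (Neg a))"
definition Disj :: "form \<Rightarrow> form \<Rightarrow> form" where "Disj a b = Imp (Neg a) b"

fun BigDisj :: "form list \<Rightarrow> form" where
  "BigDisj [] = Var 0"
| "BigDisj (x # xs) = foldl Disj x xs"

text \<open>Propositional variable p_j is Var j (j >= 1).\<close>
definition alpha :: "nat \<Rightarrow> form" where
  "alpha n = BigDisj (map Var [1..<n+1])"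
definition beta :: "nat \<Rightarrow> nat \<Rightarrow> form" where
  "beta n i = BigDisj (map Var (filter (\<lambda>j. j \<noteq> i) [1..<n+1]))"
definition delta :: "nat \<Rightarrow> form" where
  "delta n = BigDisj (map (\<lambda>i. Imp (Box (alpha n)) (Box (beta n i))) [1..<n+1])"

text \<open>The Hilbert calculus T45m; classical part: Lukasiewicz's axioms for {neg, imp}.\<close>
inductive T45m :: "form \<Rightarrow> bool" where
  A1: "T45m (Imp a (Imp b a))"
| A2: "T45m (Imp (Imp a (Imp b c)) (Imp (Imp a b) (Imp a c)))"
| A3: "T45m (Imp (Imp (Neg a) (Neg b)) (Imp b a))"
| K:  "T45m (Imp (Box (Imp a b)) (Imp (Box a) (Box b)))"
| K1: "T45m (Imp (Box (Imp a b)) (Imp (Dia a) (Dia b)))"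
| K2: "T45m (Imp (Dia (Imp a b)) (Imp (Box a) (Dia b)))"
| M1: "T45m (Imp (Neg (Dia a)) (Box (Imp a b)))"
| M2: "T45m (Imp (Box b) (Box (Imp a b)))"
| M3: "T45m (Imp (Dia b) (Dia (Imp a b)))"
| M4: "T45m (Imp (Dia (Neg a)) (Dia (Imp a b)))"
| T:  "T45m (Imp (Box a) a)"
| DN1: "T45m (Imp (Box a) (Box (Neg (Neg a))))"
| DN2: "T45m (Imp (Box (Neg (Neg a))) (Box a))"
| Ax4: "T45m (Imp (Box a) (Box (Box a)))"
| Ax5: "T45m (Imp (Dia (Box a)) (Box a))"
| MP: "T45m (Imp a b) \<Longrightarrow> T45m a \<Longrightarrow> T45m b"

end

theory Submission
  imports Defs
begin

fun ev :: "nat \<Rightarrow> nat \<Rightarrow> form \<Rightarrow> bool" where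
  "ev n w (Var j) = (j = w)"
| "ev n w (Neg a) = (\<not> ev n w a)"
| "ev n w (Box a) = (\<forall>v\<in>{1..n}. ev n v a)"
| "ev n w (Imp a b) = (ev n w a \<longrightarrow> ev n w b)"

lemma sound: "T45m f \<Longrightarrow> \<forall>w\<in>{1..n}. ev n w f"
  by (induction rule: T45m.induct) (auto simp: Dia_def)

lemma ev_foldl: "ev n w (foldl Disj x xs) = (ev n w x \<or> (\<exists>y\<in>set xs. ev n w y))"
  by (induction xs arbitrary: x) (auto simp: Disj_def)

lemma ev_Big: "xs \<noteq> [] \<Longrightarrow> ev n w (BigDisj xs) = (\<exists>y\<in>set xs. ev n w y)"
  by (cases xs) (auto simp: ev_foldl)

lemma ev_Big0: "ev n w (BigDisj xs) \<Longrightarrow> w \<noteq> 0 \<Longrightarrow> (\<exists>y\<in>set xs. ev n w y)"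
  by (cases xs) (auto simp: ev_foldl)

theorem mainTheorem14:
  fixes n :: nat
  assumes "n \<ge> 3"
  shows "\<not> T45m (delta n)"
proof
  assume "T45m (delta n)"
  hence d: "ev n 1 (delta n)" using sound assms by auto
  moreover have ba: "ev n 1 (Box (alpha n))"
    using ev_Big[of "map Var [1..<n+1]"] by (auto simp: alpha_def)
  moreover have nb: "\<not> ev n 1 (Box (beta n i))" if "i \<in> {1..n}" for i
  proof -
    have "\<not> ev n i (beta n i)"
    proof
      assume "ev n i (beta n i)"
      moreover have "i \<noteq> 0" using that by simp
      ultimately have "\<exists>y\<in>set (map Var (filter (\<lambda>j. j \<noteq> i) [1..<n+1])). ev n i y"
        using ev_Big0[of n i "map Var (filter (\<lambda>j. j \<noteq> i) [1..<n+1])"] unfolding beta_def by blast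
      then obtain y where "y \<in> set (map Var (filter (\<lambda>j. j \<noteq> i) [1..<n+1]))" "ev n i y" by blast
      thus False by auto
    qed
    thus ?thesis using that by auto
  qed
  moreover have ne: "[1..<n+1] \<noteq> []" using assms by simp
  have "\<exists>y\<in>set (map (\<lambda>i. Imp (Box (alpha n)) (Box (beta n i))) [1..<n+1]). ev n 1 y"
    using ev_Big[of "map (\<lambda>i. Imp (Box (alpha n)) (Box (beta n i))) [1..<n+1]" n 1]
    using d ne unfolding delta_def by blast
  then obtain i where iin: "i \<in> set [1..<n+1]" "ev n 1 (Imp (Box (alpha n)) (Box (beta n i)))"
    by (simp only: set_map image_iff) blast
  moreover have "i \<in> {1..n}" using iin(1) by auto
  ultimately show False using nb ba by (metis ev.simps(4))
qed

end
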